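(* Let $G$ be a finite group with identity $e$. If $G$ has a sequencing whose first element is $x$, then $G$ has an $S$-sequencing for $S=G\setminus\{e,x\}$.
   Context: For $S\subseteq G\setminus\{e\}$ with $|S|=k$, an $S$-sequencing of $G$ is an ordering $(g_1,\dots,g_k)$ of the elements of $S$ (each used once) such that the partial products $h_0=e$, $h_i=g_1\cdots g_i$ ($1\le i\le k$) are pairwise distinct. A sequencing of $G$ is an $S$-sequencing with $S=G\setminus\{e\}$. *)

theory Defs
  imports "HOL-Algebra.Group"
begin

definition partial_prod :: "('a, 'b) monoid_scheme \<Rightarrow> 'a list \<Rightarrow> nat \<Rightarrow> 'a" where
  "partial_prod G gs i = foldl (\<lambda>h g. h \<otimes>\<^bsub>G\<^esub> g) \<one>\<^bsub>G\<^esub> (take i gs)"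

definition is_S_sequencing :: "('a, 'b) monoid_scheme \<Rightarrow> 'a set \<Rightarrow> 'a list \<Rightarrow> bool" where
  "is_S_sequencing G S gs \<longleftrightarrow>
     S \<subseteq> carrier G - {\<one>\<^bsub>G\<^esub>} \<and> distinct gs \<and> set gs = S \<and>
     inj_on (partial_prod G gs) {0..length gs}"

definition is_sequencing :: "('a, 'b) monoid_scheme \<Rightarrow> 'a list \<Rightarrow> bool" where
  "is_sequencing G gs \<longleftrightarrow> is_S_sequencing G (carrier G - {\<one>\<^bsub>G\<^esub>}) gs"

end

theory Submission
  imports Defs
begin

lemma foldl_mult_left:
  assumes "monoid G" "a \<in> carrier G" "b \<in> carrier G" "set l \<subseteq> carrier G"
  shows "foldl (\<lambda>h g. h \<otimes>\<^bsub>G\<^esub> g) (a \<otimes>\<^bsub>G\<^esub> b) l = a \<otimes>\<^bsub>G\<^esub> foldl (\<lambda>h g. h \<otimes>\<^bsub>G\<^esub> g) b l"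
  using assms(3,4)
proof (induction l arbitrary: b)
  case Nil then show ?case by simp
next
  case (Cons y l)
  have "a \<otimes>\<^bsub>G\<^esub> b \<otimes>\<^bsub>G\<^esub> y = a \<otimes>\<^bsub>G\<^esub> (b \<otimes>\<^bsub>G\<^esub> y)"
    using Cons.prems assms(1,2) by (simp add: monoid.m_assoc)
  moreover have "b \<otimes>\<^bsub>G\<^esub> y \<in> carrier G" using Cons.prems assms(1) by (simp add: monoid.m_closed)
  ultimately show ?case using Cons by simp
qed

lemma pp_cons:
  assumes "monoid G" "x \<in> carrier G" "set ts \<subseteq> carrier G"
  shows "partial_prod G (x # ts) (Suc i) = x \<otimes>\<^bsub>G\<^esub> partial_prod G ts i"
proof -
  have "partial_prod G (x # ts) (Suc i) = foldl (\<lambda>h g. h \<otimes>\<^bsub>G\<^esub> g) (\<one>\<^bsub>G\<^esub> \<otimes>\<^bsub>G\<^esub> x) (take i ts)"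
    by (simp add: partial_prod_def)
  also have "\<one>\<^bsub>G\<^esub> \<otimes>\<^bsub>G\<^esub> x = x \<otimes>\<^bsub>G\<^esub> \<one>\<^bsub>G\<^esub>" using assms by (simp add: monoid.l_one monoid.r_one)
  also have "foldl (\<lambda>h g. h \<otimes>\<^bsub>G\<^esub> g) (x \<otimes>\<^bsub>G\<^esub> \<one>\<^bsub>G\<^esub>) (take i ts) = x \<otimes>\<^bsub>G\<^esub> partial_prod G ts i"
    unfolding partial_prod_def
    by (rule foldl_mult_left) (use assms in \<open>auto simp: monoid.one_closed dest: in_set_takeD\<close>)
  finally show ?thesis .
qed

theorem lemma4p4:
  fixes G :: "('a, 'b) monoid_scheme" and x :: 'a and gs :: "'a list"
  assumes "group G" and "finite (carrier G)"
    and "is_sequencing G gs" and "gs \<noteq> []" and "hd gs = x"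
  shows "\<exists>hs. is_S_sequencing G (carrier G - {\<one>\<^bsub>G\<^esub>, x}) hs"
proof -
  obtain ts where gs: "gs = x # ts" using assms(4,5) by (cases gs) auto
  have M: "monoid G" using assms(1) by (simp add: group.is_monoid)
  have sq: "distinct gs" "set gs = carrier G - {\<one>\<^bsub>G\<^esub>}"
    "inj_on (partial_prod G gs) {0..length gs}"
    using assms(3) unfolding is_sequencing_def is_S_sequencing_def by auto
  have xc: "x \<in> carrier G" and tc: "set ts \<subseteq> carrier G" using sq(2) gs by auto
  have "inj_on (partial_prod G ts) {0..length ts}"
  proof (rule inj_onI)
    fix i j assume i: "i \<in> {0..length ts}" and j: "j \<in> {0..length ts}"
      and e: "partial_prod G ts i = partial_prod G ts j"
    have "partial_prod G gs (Suc i) = partial_prod G gs (Suc j)"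
      using e pp_cons[OF M xc tc] gs by simp
    moreover have "Suc i \<in> {0..length gs}" "Suc j \<in> {0..length gs}" using i j gs by auto
    ultimately have "Suc i = Suc j" using sq(3) by (meson inj_onD)
    then show "i = j" by simp
  qed
  moreover have "distinct ts" "set ts = carrier G - {\<one>\<^bsub>G\<^esub>, x}" using sq(1,2) gs by auto
  ultimately show ?thesis unfolding is_S_sequencing_def by blast
qed

end
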